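(* For $k\ge1$ let $\Delta^k=\{\mathbf{x}\in\mathbb{R}^k:x_i\ge0,\ \sum_i x_i\le1\}$ and define $g:\Delta^k\to\mathbb{R}$ by $$g(\mathbf{x})=-\sum_i x_i\ln x_i+\sum_i(1-x_i)\ln(1-x_i)-2\Big(1-\sum_i x_i\Big)\ln\Big(1-\sum_i x_i\Big)$$ (with $0\ln 0=0$). Then $g$ is concave on $\Delta^k$, and in the interior of $\Delta^k$, $$\frac{\partial g}{\partial x_i}=\ln\left(\frac{(1-\sum_j x_j)^2}{x_i(1-x_i)}\right).$$ *)

theory Defs
  imports "HOL-Analysis.Analysis"
begin

definition xlnx :: "real \<Rightarrow> real" where
  "xlnx t = (if t = 0 then 0 else t * ln t)"

text \<open>The standard corner simplex in R^k, with k = CARD('n).\<close>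
definition simplexk :: "(real^'n) set" where
  "simplexk = {x. (\<forall>i. 0 \<le> x $ i) \<and> (\<Sum>i\<in>UNIV. x $ i) \<le> 1}"

definition gfun :: "real^'n \<Rightarrow> real" where
  "gfun x = - (\<Sum>i\<in>UNIV. xlnx (x $ i)) + (\<Sum>i\<in>UNIV. xlnx (1 - x $ i))
            - 2 * xlnx (1 - (\<Sum>i\<in>UNIV. x $ i))"

end

theory Submission
  imports Defs "HOL-Real_Asymp.Real_Asymp"
begin


lemma cs2:
  fixes a b p q :: real
  assumes "p > 0" "q > 0"
  shows "(a + b)^2 \<le> (p + q) * (a^2/p + b^2/q)"
proof -
  have "(a*q - b*p)^2 \<ge> 0" by simp
  hence "(a + b)^2 * (p*q) \<le> (p + q) * (a^2*q + b^2*p)"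
    by (simp add: algebra_simps power2_eq_square)
  moreover have "(p + q) * (a^2/p + b^2/q) = (p + q) * (a^2*q + b^2*p) / (p*q)"
    using assms by (simp add: field_simps)
  ultimately show ?thesis using assms by (simp add: field_simps)
qed

lemma fmono:
  fixes r T :: real
  assumes "r > 0" "T > 0" "r + T < 1/2"
  shows "r/2 + T*(1-T)/(1-2*T) \<le> (r+T)*(1-(r+T))/(1-2*(r+T))"
proof -
  have e: "\<And>t::real. t < 1/2 \<Longrightarrow> t*(1-t)/(1-2*t) = t/2 + t/(2*(1-2*t))"
    by (simp add: field_simps) 
  have i: "T/(2*(1-2*T)) \<le> (r+T)/(2*(1-2*(r+T)))"
    using assms by (intro frac_le) auto
  have e1: "T*(1-T)/(1-2*T) = T/2 + T/(2*(1-2*T))" using assms by (intro e) auto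
  have e2: "(r+T)*(1-(r+T))/(1-2*(r+T)) = (r+T)/2 + (r+T)/(2*(1-2*(r+T)))" using assms by (intro e) auto
  have g: "r/2 + (T/2 + a) \<le> (r+T)/2 + b" if "a \<le> b" for a b :: real using that by (simp add: add_divide_distrib)
  show ?thesis unfolding e1 e2 by (rule g[OF i])
qed

lemma scalar2:
  fixes r T S W :: real
  assumes "r > 0" "T > 0" "r + T < 1/2"
  shows "(S-W)^2/(r+T) - (S-W)^2/(1-r-T) \<le> (1-2*T)/(1-T) * W^2/T + 2*S^2/r"
proof -
  define F where "F = T*(1-T)/(1-2*T)"
  have F: "F > 0" using assms by (simp add: F_def)
  define m where "m = r + T"
  have c: "1/m - 1/(1-m) \<ge> 0"
  proof -
    have "1/(1-m) \<le> 1/m" using assms by (intro divide_left_mono) (auto simp: m_def)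
    thus ?thesis by simp
  qed
  have cs: "(S-W)^2 \<le> (r/2 + F) * (S^2/(r/2) + W^2/F)"
    using cs2[of "r/2" F S "-W"] F assms by simp
  have "(1/m - 1/(1-m)) * (r/2 + F) \<le> 1"
  proof -
    have "r/2 + F \<le> m*(1-m)/(1-2*m)" using fmono[OF assms] by (simp add: F_def m_def)
    moreover have "(1/m - 1/(1-m)) * (m*(1-m)/(1-2*m)) = 1"
    proof -
      have "m > 0" "m < 1/2" using assms by (auto simp: m_def)
      hence "1/m - 1/(1-m) = (1-2*m)/(m*(1-m))" by (simp add: divide_simps)
      moreover have "(1-2*m) \<noteq> 0" "m*(1-m) \<noteq> 0" using \<open>m>0\<close> \<open>m<1/2\<close> by auto
      ultimately show ?thesis by simp
    qed
    ultimately show ?thesis using mult_left_mono[OF _ c, of "r/2 + F" "m*(1-m)/(1-2*m)"] by linarith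
  qed
  have "(S-W)^2/(r+T) - (S-W)^2/(1-r-T) = (1/m - 1/(1-m)) * (S-W)^2"
    by (simp add: m_def field_simps diff_divide_distrib)
  also have "\<dots> \<le> (1/m - 1/(1-m)) * ((r/2 + F) * (S^2/(r/2) + W^2/F))"
    using cs c by (rule mult_left_mono)
  also have "\<dots> = ((1/m - 1/(1-m)) * (r/2 + F)) * (S^2/(r/2) + W^2/F)" by simp
  also have "\<dots> \<le> 1 * (S^2/(r/2) + W^2/F)"
    apply (rule mult_right_mono) using \<open>(1/m - 1/(1-m)) * (r/2 + F) \<le> 1\<close> apply simp
    using F assms by simp
  also have "\<dots> = (1-2*T)/(1-T) * W^2/T + 2*S^2/r"
    using assms by (simp add: F_def field_simps)
  finally show ?thesis .
qed

lemma scalar1: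
  fixes x T v :: real
  assumes "0 < x" "x \<le> T" "T < 1/2"
  shows "v^2/(1-x) \<le> v^2/x - (1-2*T)/(1-T) * (v^2/x)"
proof -
  have "(1-2*T)/(1-T) \<le> 1 - x/(1-x)"
    using assms by (simp add: field_simps)
  hence "(1-2*T)/(1-T) * (v^2/x) \<le> (1 - x/(1-x)) * (v^2/x)"
    using assms by (intro mult_right_mono) auto
  also have "\<dots> = v^2/x - v^2/(1-x)" using assms by (simp add: field_simps)
  finally show ?thesis by simp
qed

lemma cs_weighted:
  fixes x v :: "'a \<Rightarrow> real"
  assumes "\<And>j. j \<in> J \<Longrightarrow> x j > 0"
  shows "(sum v J)^2 \<le> sum x J * (\<Sum>j\<in>J. (v j)^2 / x j)"
proof -
  have "(sum v J)^2 = (\<Sum>j\<in>J. sqrt (x j) * (v j / sqrt (x j)))^2"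
  proof -
    have "sqrt (x j) * (v j / sqrt (x j)) = v j" if "j \<in> J" for j
      using assms[OF that] by simp
    thus ?thesis by simp
  qed
  also have "\<dots> \<le> (\<Sum>j\<in>J. (sqrt (x j))^2) * (\<Sum>j\<in>J. (v j / sqrt (x j))^2)"
    by (rule Cauchy_Schwarz_ineq_sum)
  also have "\<dots> = sum x J * (\<Sum>j\<in>J. (v j)^2 / x j)"
    using assms by (intro arg_cong2[where f="(*)"] sum.cong) (auto simp: power_divide less_imp_le)
  finally show ?thesis .
qed

lemma key_ineq:
  fixes x v :: "'a::finite \<Rightarrow> real"
  assumes pos: "\<And>i. 0 < x i" and s1: "sum x UNIV < 1"
  shows "(\<Sum>i\<in>UNIV. (v i)^2/(1 - x i)) \<le> (\<Sum>i\<in>UNIV. (v i)^2/x i) + 2*(sum v UNIV)^2/(1 - sum x UNIV)"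
proof (cases "\<forall>i. x i \<le> 1/2")
  case True
  have "(\<Sum>i\<in>UNIV. (v i)^2/(1 - x i)) \<le> (\<Sum>i\<in>UNIV. (v i)^2/x i)"
  proof (rule sum_mono)
    fix i
    show "(v i)^2/(1 - x i) \<le> (v i)^2/x i"
    proof -
      have "x i \<le> 1/2" "0 < x i" using True pos[of i] by auto
      thus ?thesis by (intro divide_left_mono) (auto intro: mult_pos_pos)
    qed
  qed
  moreover have "0 \<le> 2*(sum v UNIV)^2/(1 - sum x UNIV)" using s1 by simp
  ultimately show ?thesis by linarith
next
  case False
  then obtain i where xi: "x i > 1/2" by (auto simp: not_le)
  define J where "J = UNIV - {i}"
  define T where "T = sum x J"
  define W where "W = sum v J"
  define r where "r = 1 - sum x UNIV"
  define S where "S = sum v UNIV"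
  have r: "r > 0" using s1 by (simp add: r_def)
  have sx: "sum x UNIV = x i + T" unfolding T_def J_def by (simp add: sum.remove)
  have sv: "S = v i + W" unfolding S_def W_def J_def by (simp add: sum.remove)
  have T0: "T \<ge> 0" unfolding T_def using pos by (simp add: sum_nonneg less_imp_le)
  have Th: "T < 1/2" using sx xi s1 by linarith
  have xj: "x j \<le> T" if "j \<in> J" for j
    unfolding T_def using that pos by (intro member_le_sum) (auto simp: less_imp_le)
  define Q where "Q = (\<Sum>j\<in>J. (v j)^2 / x j)"
  define \<kappa> where "\<kappa> = (1-2*T)/(1-T)"
  have \<kappa>0: "\<kappa> \<ge> 0" using Th by (simp add: \<kappa>_def)
  have partJ: "(\<Sum>j\<in>J. (v j)^2/(1 - x j)) \<le> Q - \<kappa> * Q"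
  proof -
    have "(\<Sum>j\<in>J. (v j)^2/(1 - x j)) \<le> (\<Sum>j\<in>J. (v j)^2/x j - \<kappa> * ((v j)^2/x j))"
      using xj pos Th unfolding \<kappa>_def by (intro sum_mono scalar1) auto
    also have "\<dots> = Q - \<kappa> * Q" by (simp add: Q_def sum_subtractf sum_distrib_left)
    finally show ?thesis .
  qed
  have spl1: "(\<Sum>i\<in>UNIV. (v i)^2/(1 - x i)) = (v i)^2/(1 - x i) + (\<Sum>j\<in>J. (v j)^2/(1 - x j))"
    unfolding J_def by (simp add: sum.remove)
  have spl2: "(\<Sum>i\<in>UNIV. (v i)^2/x i) = (v i)^2/x i + Q"
    unfolding J_def Q_def by (simp add: sum.remove)
  have main: "(v i)^2/(1 - x i) - (v i)^2/x i \<le> \<kappa> * Q + 2*S^2/r"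
  proof (cases "J = {}")
    case True
    hence "T = 0" "W = 0" by (auto simp: T_def W_def)
    hence "1 - x i = r" "v i = S" using sx sv by (auto simp: r_def)
    moreover have "(v i)^2/(x i) \<ge> 0" using pos[of i] by simp
    moreover have "\<kappa> * Q \<ge> 0" using \<kappa>0 pos by (auto simp: Q_def less_imp_le intro!: sum_nonneg mult_nonneg_nonneg divide_nonneg_nonneg)
    moreover have "S^2/r \<ge> 0" using r by simp
    ultimately show ?thesis by simp
  next
    case False
    have Tp: "T > 0" unfolding T_def using False pos by (intro sum_pos) auto
    have "W^2 \<le> T * Q" unfolding W_def T_def Q_def using pos by (intro cs_weighted) auto
    hence "W^2 / T \<le> Q" using Tp by (simp add: field_simps)
    hence "\<kappa> * (W^2/T) \<le> \<kappa> * Q" using \<kappa>0 by (rule mult_left_mono)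
    moreover have "(S-W)^2/(r+T) - (S-W)^2/(1-r-T) \<le> (1-2*T)/(1-T) * W^2/T + 2*S^2/r"
      using r Tp sx xi by (intro scalar2) (auto simp: r_def)
    moreover have "r + T = 1 - x i" "S - W = v i" "1 - r - T = x i" using sx sv by (auto simp: r_def)
    ultimately have "(v i)^2/(1 - x i) - (v i)^2/x i \<le> \<kappa> * (W^2/T) + 2*S^2/r"
      by (simp add: \<kappa>_def)
    with \<open>\<kappa> * (W^2/T) \<le> \<kappa> * Q\<close> show ?thesis by linarith
  qed
  show ?thesis unfolding spl1 spl2 using main partJ by (simp add: S_def r_def)
qed



lemma xlnx_pos: "0 < y \<Longrightarrow> xlnx y = y * ln y" by (simp add: xlnx_def)

lemma xlnx_deriv: "0 < y \<Longrightarrow> (xlnx has_real_derivative ln y + 1) (at y)"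
proof -
  assume y: "0 < y"
  have "((\<lambda>t. t * ln t) has_real_derivative ln y + 1) (at y)"
    using y by (auto intro!: derivative_eq_intros)
  then show ?thesis
    by (rule has_field_derivative_transform_within_open[where S="{0<..}"]) (use y in \<open>auto simp: xlnx_def\<close>)
qed

lemma xlnx_chain[derivative_intros]:
  "(f has_real_derivative f') (at t) \<Longrightarrow> 0 < f t \<Longrightarrow> D = (ln (f t) + 1) * f' \<Longrightarrow>
   ((\<lambda>t. xlnx (f t)) has_real_derivative D) (at t)"
  using DERIV_chain2[OF xlnx_deriv] by blast

definition posU :: "(real^'n) set" where
  "posU = {x. (\<forall>i. 0 < x $ i) \<and> (\<Sum>i\<in>UNIV. x $ i) < 1}"

lemma convex_posU: "convex (posU :: (real^'n) set)"
  unfolding convex_def posU_def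
proof (intro ballI allI impI, clarsimp)
  fix x y :: "real^'n" and u v :: real
  assume x: "\<forall>i. 0 < x $ i" "(\<Sum>i\<in>UNIV. x $ i) < 1" and y: "\<forall>i. 0 < y $ i" "(\<Sum>i\<in>UNIV. y $ i) < 1"
    and uv: "0 \<le> u" "0 \<le> v" "u + v = 1"
  show "(\<forall>i. 0 < u * x $ i + v * y $ i) \<and> (\<Sum>i\<in>UNIV. u * x $ i + v * y $ i) < 1"
  proof
    show "\<forall>i. 0 < u * x $ i + v * y $ i"
    proof
      fix i
      show "0 < u * x $ i + v * y $ i"
      proof (cases "u = 0")
        case True thus ?thesis using uv y by auto
      next
        case False thus ?thesis using uv x y
          by (smt (verit) mult_nonneg_nonneg mult_pos_pos)
      qed
    qed
    have "(\<Sum>i\<in>UNIV. u * x $ i + v * y $ i) = u * (\<Sum>i\<in>UNIV. x $ i) + v * (\<Sum>i\<in>UNIV. y $ i)"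
      by (simp add: sum.distrib sum_distrib_left)
    also have "\<dots> < 1"
    proof (cases "u = 0")
      case True thus ?thesis using uv y by auto
    next
      case False
      hence "u * (\<Sum>i\<in>UNIV. x $ i) < u" using x uv by simp
      moreover have "v * (\<Sum>i\<in>UNIV. y $ i) \<le> v" using y uv by (simp add: mult_left_le)
      ultimately show ?thesis using uv by linarith
    qed
    finally show "(\<Sum>i\<in>UNIV. u * x $ i + v * y $ i) < 1" .
  qed
qed



lemma posU_lt1: "p \<in> posU \<Longrightarrow> p $ i < 1"
proof -
  assume p: "p \<in> posU"
  have "p $ i \<le> (\<Sum>j\<in>UNIV. p $ j)" using p by (intro member_le_sum) (auto simp: posU_def less_imp_le)
  thus ?thesis using p by (simp add: posU_def)
qed

lemma concave_posU: "concave_on (posU :: (real^'n) set) gfun"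
  unfolding concave_on_iff
proof (intro conjI convex_posU ballI allI impI)
  fix x y :: "real^'n" and u w :: real
  assume x: "x \<in> posU" and y: "y \<in> posU" and u: "0 \<le> u" and w: "0 \<le> w" and uw: "u + w = 1"
  define v where "v = y - x"
  define C where "C = {t. x + t *\<^sub>R v \<in> posU}"
  have convC: "convex C"
    unfolding convex_def C_def
  proof (clarsimp)
    fix s t a b :: real
    assume "x + s *\<^sub>R v \<in> posU" "x + t *\<^sub>R v \<in> posU" "0 \<le> a" "0 \<le> b" "a + b = 1"
    hence "a *\<^sub>R (x + s *\<^sub>R v) + b *\<^sub>R (x + t *\<^sub>R v) \<in> posU"
      using convex_posU unfolding convex_def by blast
    moreover have "a *\<^sub>R (x + s *\<^sub>R v) + b *\<^sub>R (x + t *\<^sub>R v) = x + (a * s + b * t) *\<^sub>R v"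
      using \<open>a + b = 1\<close> by (simp add: algebra_simps flip: scaleR_add_left)
    ultimately show "x + (a * s + b * t) *\<^sub>R v \<in> posU" by simp
  qed
  define p where "p t i = x $ i + t * v $ i" for t i
  define \<phi> where "\<phi> t = - (\<Sum>i\<in>UNIV. xlnx (p t i)) + (\<Sum>i\<in>UNIV. xlnx (1 - p t i))
       - 2 * xlnx (1 - (\<Sum>i\<in>UNIV. p t i))" for t
  define \<phi>' where "\<phi>' t = - (\<Sum>i\<in>UNIV. (ln (p t i) + 1) * v $ i) + (\<Sum>i\<in>UNIV. (ln (1 - p t i) + 1) * (- v $ i))
       - 2 * ((ln (1 - (\<Sum>i\<in>UNIV. p t i)) + 1) * (- (\<Sum>i\<in>UNIV. v $ i)))" for t
  define \<phi>'' where "\<phi>'' t = - (\<Sum>i\<in>UNIV. (v $ i)^2 / p t i) + (\<Sum>i\<in>UNIV. (v $ i)^2 / (1 - p t i))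
       - 2 * (\<Sum>i\<in>UNIV. v $ i)^2 / (1 - (\<Sum>i\<in>UNIV. p t i))" for t
  have pC: "0 < p t i" "0 < 1 - p t i" "0 < 1 - (\<Sum>i\<in>UNIV. p t i)" if "t \<in> C" for t i
  proof -
    have m: "x + t *\<^sub>R v \<in> posU" using that by (simp add: C_def)
    have e: "(x + t *\<^sub>R v) $ j = p t j" for j by (simp add: p_def)
    show "0 < p t i" using m by (simp add: posU_def p_def)
    show "0 < 1 - p t i" using posU_lt1[OF m, of i] e[of i] by simp
    show "0 < 1 - (\<Sum>i\<in>UNIV. p t i)" using m by (simp add: posU_def p_def)
  qed
  have dp: "((\<lambda>t. p t i) has_real_derivative v $ i) (at t)" for t i
    unfolding p_def by (auto intro!: derivative_eq_intros)
  have d1: "(\<phi> has_real_derivative \<phi>' t) (at t)" if "t \<in> C" for t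
    unfolding \<phi>_def[abs_def] \<phi>'_def
    by (rule derivative_eq_intros dp refl pC[OF that] | simp)+
  have d2: "(\<phi>' has_real_derivative \<phi>'' t) (at t)" if "t \<in> C" for t
    unfolding \<phi>'_def[abs_def] \<phi>''_def
    apply (rule derivative_eq_intros dp refl pC[OF that] | simp)+
    apply (simp add: power2_eq_square)
    done
  have neg: "\<phi>'' t \<le> 0" if "t \<in> C" for t
  proof -
    have "(\<Sum>i\<in>UNIV. (v $ i)^2/(1 - p t i)) \<le> (\<Sum>i\<in>UNIV. (v $ i)^2/p t i) + 2*(\<Sum>i\<in>UNIV. v $ i)^2/(1 - (\<Sum>i\<in>UNIV. p t i))"
      using key_ineq[of "p t" "\<lambda>i. v $ i"] pC[OF that] by simp
    thus ?thesis by (simp add: \<phi>''_def)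
  qed
  have cc: "concave_on C \<phi>" by (rule f''_le0_imp_concave[OF convC d1 d2 neg])
  have "0 \<in> C" "1 \<in> C" using x y by (auto simp: C_def v_def)
  from concave_onD[OF cc _ _ this, of w] w uw u
  have "\<phi> ((1 - w) * 0 + w * 1) \<ge> (1 - w) * \<phi> 0 + w * \<phi> 1" by simp
  moreover have "\<phi> t = gfun (x + t *\<^sub>R v)" for t by (simp add: \<phi>_def gfun_def p_def)
  moreover have "x + w *\<^sub>R v = u *\<^sub>R x + w *\<^sub>R y"
    using uw by (simp add: v_def algebra_simps flip: scaleR_add_left)
  moreover have "1 - w = u" using uw by simp
  ultimately show "u * gfun x + w * gfun y \<le> gfun (u *\<^sub>R x + w *\<^sub>R y)" by (simp add: v_def)
qed



lemma xlnx_eq: "xlnx = (\<lambda>t. t * ln t)" by (auto simp: xlnx_def fun_eq_iff)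

lemma isCont_xlnx: "isCont xlnx y"
proof (cases "y = 0")
  case True
  have r: "((\<lambda>t::real. t * ln t) \<longlongrightarrow> 0) (at_right 0)" by real_asymp
  have l: "((\<lambda>t::real. t * ln t) \<longlongrightarrow> 0) (at_left 0)"
  proof -
    have "((\<lambda>t::real. - (t * ln t)) \<longlongrightarrow> 0) (at_right 0)" by real_asymp
    hence "((\<lambda>t::real. (-t) * ln (-t)) \<longlongrightarrow> 0) (at_right (-0))" by (simp add: ln_minus)
    thus ?thesis by (simp add: filterlim_at_left_to_right[where a=0])
  qed
  show ?thesis unfolding isCont_def xlnx_eq True
    using filterlim_split_at[OF l r] by simp
next
  case False
  thus ?thesis unfolding xlnx_eq by (intro continuous_intros isCont_ln)
qed

lemma isCont_xlnx_comp[continuous_intros]: "isCont f x \<Longrightarrow> isCont (\<lambda>x. xlnx (f x)) x"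
  using isCont_o2 isCont_xlnx by blast

lemma isCont_gfun: "isCont (gfun :: real^'n \<Rightarrow> real) x"
  unfolding gfun_def[abs_def] by (intro continuous_intros)

lemma posU_sub: "posU \<subseteq> simplexk"
  by (auto simp: posU_def simplexk_def less_imp_le)

lemma convex_simplexk: "convex (simplexk :: (real^'n) set)"
  unfolding convex_def simplexk_def
proof (intro ballI allI impI, clarsimp)
  fix x y :: "real^'n" and u v :: real
  assume uv: "0 \<le> u" "0 \<le> v" "u + v = 1" and x: "\<forall>i. 0 \<le> x $ i" "(\<Sum>i\<in>UNIV. x $ i) \<le> 1" and y: "\<forall>i. 0 \<le> y $ i" "(\<Sum>i\<in>UNIV. y $ i) \<le> 1"
  show "(\<Sum>i\<in>UNIV. u * x $ i + v * y $ i) \<le> 1"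
  proof -
    have "(\<Sum>i\<in>UNIV. u * x $ i + v * y $ i) = u * (\<Sum>i\<in>UNIV. x $ i) + v * (\<Sum>i\<in>UNIV. y $ i)"
      by (simp add: sum.distrib sum_distrib_left)
    also have "\<dots> \<le> u * 1 + v * 1" using x y uv by (intro add_mono mult_left_mono) auto
    finally show ?thesis using uv by simp
  qed
qed

lemma sum_axis: "(\<Sum>j\<in>UNIV. (x + d *\<^sub>R axis i (1::real)) $ j) = (\<Sum>j\<in>UNIV. x $ j) + d"
proof -
  have "(x + d *\<^sub>R axis i (1::real)) $ j = x $ j + (if j = i then d else 0)" for j
    by (simp add: axis_def)
  hence "(\<Sum>j\<in>UNIV. (x + d *\<^sub>R axis i (1::real)) $ j) = (\<Sum>j\<in>UNIV. x $ j + (if j = i then d else 0))"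
    by simp
  also have "\<dots> = (\<Sum>j\<in>UNIV. x $ j) + d" by (simp add: sum.distrib)
  finally show ?thesis .
qed

lemma interior_sub: "interior (simplexk :: (real^'n) set) \<subseteq> posU"
proof
  fix x :: "real^'n" assume "x \<in> interior simplexk"
  then obtain e where e: "e > 0" "ball x e \<subseteq> simplexk" by (meson mem_interior)
  have inS: "x + d *\<^sub>R axis i 1 \<in> simplexk" if "\<bar>d\<bar> < e" for d i
  proof -
    have "dist x (x + d *\<^sub>R axis i 1) < e" using that by (simp add: dist_norm)
    thus ?thesis using e by auto
  qed
  have "0 < x $ i" for i
  proof -
    have "x + (- e/2) *\<^sub>R axis i 1 \<in> simplexk" using e by (intro inS) auto
    hence "\<forall>j. 0 \<le> (x + (- e/2) *\<^sub>R axis i 1) $ j" unfolding simplexk_def by blast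
    hence "0 \<le> (x + (- e/2) *\<^sub>R axis i 1) $ i" by blast
    thus ?thesis using e by simp
  qed
  moreover have "(\<Sum>j\<in>UNIV. x $ j) < 1"
  proof -
    have "x + (e/2) *\<^sub>R axis undefined 1 \<in> simplexk" using e by (intro inS) auto
    hence "(\<Sum>j\<in>UNIV. (x + (e/2) *\<^sub>R axis undefined 1) $ j) \<le> 1" by (simp only: simplexk_def mem_Collect_eq)
    hence "(\<Sum>j\<in>UNIV. x $ j) + e/2 \<le> 1" by (simp only: sum_axis)
    thus ?thesis using e by linarith
  qed
  ultimately show "x \<in> posU" by (simp add: posU_def)
qed

lemma toward_posU:
  fixes a c :: "real^'n"
  assumes a: "a \<in> simplexk" and c: "c \<in> posU" and e: "0 < e" "e \<le> 1"
  shows "a + e *\<^sub>R (c - a) \<in> posU"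
proof -
  have co: "(a + e *\<^sub>R (c - a)) $ i = (1 - e) * a $ i + e * c $ i" for i by (simp add: algebra_simps)
  have "0 < (1 - e) * a $ i + e * c $ i" for i
  proof -
    have "0 \<le> (1 - e) * a $ i" using a e by (simp add: simplexk_def)
    moreover have "0 < e * c $ i" using c e by (simp add: posU_def)
    ultimately show ?thesis by linarith
  qed
  moreover have "(\<Sum>i\<in>UNIV. (1 - e) * a $ i + e * c $ i) < 1"
  proof -
    have "(\<Sum>i\<in>UNIV. (1 - e) * a $ i + e * c $ i) = (1 - e) * (\<Sum>i\<in>UNIV. a $ i) + e * (\<Sum>i\<in>UNIV. c $ i)"
      by (simp add: sum.distrib sum_distrib_left)
    also have "\<dots> < (1 - e) * 1 + e * 1"
      using a c e by (intro add_le_less_mono mult_left_mono mult_strict_left_mono) (auto simp: simplexk_def posU_def)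
    finally show ?thesis by simp
  qed
  ultimately show ?thesis unfolding posU_def mem_Collect_eq co by blast
qed

lemma posU_nonempty: "\<exists>c::real^'n. c \<in> posU"
proof -
  define c :: "real^'n" where "c = (\<chi> i. 1 / (2 * real CARD('n)))"
  have "(\<Sum>i\<in>UNIV. c $ i) = 1/2" by (simp add: c_def)
  moreover have "0 < c $ i" for i by (simp add: c_def)
  ultimately have "c \<in> posU" by (simp add: posU_def)
  thus ?thesis by blast
qed

lemma lim_line: "((\<lambda>e. gfun (q + e *\<^sub>R (c - q))) \<longlongrightarrow> gfun (q :: real^'n)) (at_right 0)"
proof -
  have "isCont (\<lambda>e. gfun (q + e *\<^sub>R (c - q))) 0"
    by (intro continuous_intros isCont_o2[OF _ isCont_gfun])
  hence "((\<lambda>e. gfun (q + e *\<^sub>R (c - q))) \<longlongrightarrow> gfun q) (at 0)" by (simp add: isCont_def)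
  thus ?thesis by (rule tendsto_mono[OF at_le, rotated]) simp
qed

lemma concave_simplexk: "concave_on (simplexk :: (real^'n) set) gfun"
  unfolding concave_on_iff
proof (intro conjI convex_simplexk ballI allI impI)
  fix a b :: "real^'n" and u w :: real
  assume a: "a \<in> simplexk" and b: "b \<in> simplexk" and u: "0 \<le> u" and w: "0 \<le> w" and uw: "u + w = 1"
  obtain c :: "real^'n" where c: "c \<in> posU" using posU_nonempty by blast
  define p where "p = u *\<^sub>R a + w *\<^sub>R b"
  have ev: "eventually (\<lambda>e. 0 \<le> gfun (p + e *\<^sub>R (c - p)) - (u * gfun (a + e *\<^sub>R (c - a)) + w * gfun (b + e *\<^sub>R (c - b)))) (at_right 0)"
    unfolding eventually_at_right_field
  proof (intro exI[of _ 1] conjI allI impI)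
    fix e :: real assume e: "0 < e" "e < 1"
    have "a + e *\<^sub>R (c - a) \<in> posU" "b + e *\<^sub>R (c - b) \<in> posU"
      using toward_posU[OF a c] toward_posU[OF b c] e by auto
    hence "u * gfun (a + e *\<^sub>R (c - a)) + w * gfun (b + e *\<^sub>R (c - b))
        \<le> gfun (u *\<^sub>R (a + e *\<^sub>R (c - a)) + w *\<^sub>R (b + e *\<^sub>R (c - b)))"
      using concave_posU u w uw unfolding concave_on_iff by blast
    moreover have "u *\<^sub>R (a + e *\<^sub>R (c - a)) + w *\<^sub>R (b + e *\<^sub>R (c - b)) = p + e *\<^sub>R (c - p)"
    proof -
      have "u *\<^sub>R (a + e *\<^sub>R (c - a)) + w *\<^sub>R (b + e *\<^sub>R (c - b)) = p + e *\<^sub>R ((u + w) *\<^sub>R c - p)"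
        by (simp add: p_def algebra_simps)
      thus ?thesis using uw by simp
    qed
    ultimately show "0 \<le> gfun (p + e *\<^sub>R (c - p)) - (u * gfun (a + e *\<^sub>R (c - a)) + w * gfun (b + e *\<^sub>R (c - b)))"
      by simp
  qed simp
  have lim: "((\<lambda>e. gfun (p + e *\<^sub>R (c - p)) - (u * gfun (a + e *\<^sub>R (c - a)) + w * gfun (b + e *\<^sub>R (c - b))))
      \<longlongrightarrow> gfun p - (u * gfun a + w * gfun b)) (at_right 0)"
    by (intro tendsto_intros lim_line)
  have "0 \<le> gfun p - (u * gfun a + w * gfun b)"
    using tendsto_lowerbound[OF lim ev] by simp
  thus "u * gfun a + w * gfun b \<le> gfun (u *\<^sub>R a + w *\<^sub>R b)" by (simp add: p_def)
qed

lemma deriv_part: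
  fixes x :: "real^'n"
  assumes x: "x \<in> posU"
  shows "((\<lambda>t. gfun (x + t *\<^sub>R axis i 1)) has_real_derivative
          ln ((1 - (\<Sum>j\<in>UNIV. x $ j))\<^sup>2 / (x $ i * (1 - x $ i)))) (at 0)"
proof -
  define v :: "real^'n" where "v = axis i 1"
  define p where "p t j = x $ j + t * v $ j" for t j
  have p0: "p 0 j = x $ j" for j by (simp add: p_def)
  have pos: "0 < p 0 j" "0 < 1 - p 0 j" "0 < 1 - (\<Sum>j\<in>UNIV. p 0 j)" for j
    using x posU_lt1[OF x, of j] by (auto simp: p0 posU_def)
  have dp: "((\<lambda>t. p t j) has_real_derivative v $ j) (at t)" for t j
    unfolding p_def by (auto intro!: derivative_eq_intros)
  have eq: "gfun (x + t *\<^sub>R axis i 1) = - (\<Sum>j\<in>UNIV. xlnx (p t j)) + (\<Sum>j\<in>UNIV. xlnx (1 - p t j))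
       - 2 * xlnx (1 - (\<Sum>j\<in>UNIV. p t j))" for t
    by (simp add: gfun_def p_def v_def)
  have d: "((\<lambda>t. - (\<Sum>j\<in>UNIV. xlnx (p t j)) + (\<Sum>j\<in>UNIV. xlnx (1 - p t j))
       - 2 * xlnx (1 - (\<Sum>j\<in>UNIV. p t j))) has_real_derivative
      - (\<Sum>j\<in>UNIV. (ln (p 0 j) + 1) * v $ j) + (\<Sum>j\<in>UNIV. (ln (1 - p 0 j) + 1) * (- v $ j))
       - 2 * ((ln (1 - (\<Sum>j\<in>UNIV. p 0 j)) + 1) * (- (\<Sum>j\<in>UNIV. v $ j)))) (at 0)"
    by (rule derivative_eq_intros dp refl pos | simp)+
  have vs: "(\<Sum>j\<in>UNIV. f j * v $ j) = f i" for f :: "'n \<Rightarrow> real"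
    by (simp add: v_def axis_def if_distrib cong: if_cong)
  have vs': "(\<Sum>j\<in>UNIV. f j * (- v $ j)) = - f i" for f :: "'n \<Rightarrow> real"
    by (simp add: v_def axis_def if_distrib cong: if_cong)
  have vs1: "(\<Sum>j\<in>UNIV. v $ j) = 1" by (simp add: v_def axis_def)
  have val: "- (\<Sum>j\<in>UNIV. (ln (p 0 j) + 1) * v $ j) + (\<Sum>j\<in>UNIV. (ln (1 - p 0 j) + 1) * (- v $ j))
       - 2 * ((ln (1 - (\<Sum>j\<in>UNIV. p 0 j)) + 1) * (- (\<Sum>j\<in>UNIV. v $ j)))
       = ln ((1 - (\<Sum>j\<in>UNIV. x $ j))\<^sup>2 / (x $ i * (1 - x $ i)))"
  proof -
    have a: "0 < x $ i" "0 < 1 - x $ i" "0 < 1 - (\<Sum>j\<in>UNIV. x $ j)" using pos(1)[of i] pos(2)[of i] pos(3) by (auto simp: p0)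
    have "ln ((1 - (\<Sum>j\<in>UNIV. x $ j))\<^sup>2 / (x $ i * (1 - x $ i)))
       = 2 * ln (1 - (\<Sum>j\<in>UNIV. x $ j)) - (ln (x $ i) + ln (1 - x $ i))"
      using a by (simp add: ln_div ln_mult ln_realpow)
    thus ?thesis unfolding vs vs' vs1 p0 by (simp add: algebra_simps)
  qed
  show ?thesis unfolding eq using d val by simp
qed

theorem mainTheorem8:
  shows "concave_on (simplexk :: (real^'n) set) gfun \<and>
    (\<forall>x \<in> interior (simplexk :: (real^'n) set). \<forall>i.
       ((\<lambda>t. gfun (x + t *\<^sub>R axis i 1)) has_real_derivative
          ln ((1 - (\<Sum>j\<in>UNIV. x $ j))\<^sup>2 / (x $ i * (1 - x $ i)))) (at 0))"
  using concave_simplexk deriv_part interior_sub by blast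

end
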